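(* Let $(P,\le)$ be a finite poset and $v:P\to\mathbb{R}$ a function. In each of the following four cases the given function $d_v:P\times P\to\mathbb{R}$ is a metric on $P$: (i) $\downarrow x\cap\downarrow y\neq\emptyset$ for all $x,y\in P$ and $v$ is a strictly isotone lower valuation; $d_v(x,y)=v(x)+v(y)-2v^-(x,y)$. (ii) $\uparrow x\cap\uparrow y\neq\emptyset$ for all $x,y\in P$ and $v$ is a strictly antitone lower valuation; $d_v(x,y)=v(x)+v(y)-2v^+(x,y)$. (iii) $\uparrow x\cap\uparrow y\neq\emptyset$ for all $x,y\in P$ and $v$ is a strictly isotone upper valuation; $d_v(x,y)=2v^+(x,y)-v(x)-v(y)$. (iv) $\downarrow x\cap\downarrow y\neq\emptyset$ for all $x,y\in P$ and $v$ is a strictly antitone upper valuation; $d_v(x,y)=2v^-(x,y)-v(x)-v(y)$.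
   Context: For a poset $(P,\le)$ and $x\in P$: $\downarrow x=\{x'\in P: x'\le x\}$, $\uparrow x=\{x'\in P: x\le x'\}$. A function $f:P\to\mathbb{R}$ is isotone if $x\le y\Rightarrow f(x)\le f(y)$, strictly isotone if $x<y\Rightarrow f(x)<f(y)$, antitone if $x\le y\Rightarrow f(x)\ge f(y)$, strictly antitone if $x<y\Rightarrow f(x)>f(y)$. For a monotone $f$ and $x,y\in P$ define $f^-(x,y)=\sup\{f(z):z\in\downarrow x\cap\downarrow y\}$ if $f$ is isotone, $=\inf\{f(z):z\in\downarrow x\cap\downarrow y\}$ if $f$ is antitone; $f^+(x,y)=\inf\{f(z):z\in\uparrow x\cap\uparrow y\}$ if $f$ is isotone, $=\sup\{f(z):z\in\uparrow x\cap\uparrow y\}$ if $f$ is antitone; with the conventions $\inf\emptyset=+\infty$, $\sup\emptyset=-\infty$. A lower valuation is either an isotone $v:P\to\mathbb{R}$ such that $\downarrow x\cap\downarrow y\neq\emptyset$ for all $x,y$, or an antitone $v$ such that $\uparrow x\cap\uparrow y\neq\emptyset$ for all $x,y$, satisfying in either case $v(x)+v(y)\le v^-(x,y)+v^+(x,y)$ for all $x,y\in P$. An upper valuation is either an isotone $v$ such that $\uparrow x\cap\uparrow y\neq\emptyset$ for all $x,y$, or an antitone $v$ such that $\downarrow x\cap\downarrow y\neq\emptyset$ for all $x,y$, satisfying in either case $v^-(x,y)+v^+(x,y)\le v(x)+v(y)$ for all $x,y\in P$. *)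

theory Defs
  imports Complex_Main "HOL-Library.Extended_Real"
begin

text \<open>Finite posets are modelled by a finite type of class order.
  Principal down-sets and up-sets.\<close>

definition down :: "'a::order \<Rightarrow> 'a set" where
  "down x = {x'. x' \<le> x}"

definition up :: "'a::order \<Rightarrow> 'a set" where
  "up x = {x'. x \<le> x'}"

definition isotone :: "('a::order \<Rightarrow> real) \<Rightarrow> bool" where
  "isotone f \<longleftrightarrow> (\<forall>x y. x \<le> y \<longrightarrow> f x \<le> f y)"

definition strictly_isotone :: "('a::order \<Rightarrow> real) \<Rightarrow> bool" where
  "strictly_isotone f \<longleftrightarrow> (\<forall>x y. x < y \<longrightarrow> f x < f y)"

definition antitone :: "('a::order \<Rightarrow> real) \<Rightarrow> bool" where
  "antitone f \<longleftrightarrow> (\<forall>x y. x \<le> y \<longrightarrow> f x \<ge> f y)"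

definition strictly_antitone :: "('a::order \<Rightarrow> real) \<Rightarrow> bool" where
  "strictly_antitone f \<longleftrightarrow> (\<forall>x y. x < y \<longrightarrow> f x > f y)"

text \<open>f^- and f^+ (values in the extended reals, so that sup {} = -\<infinity>, inf {} = +\<infinity>),
  in the isotone and in the antitone reading respectively.\<close>

definition fminus_iso :: "('a::order \<Rightarrow> real) \<Rightarrow> 'a \<Rightarrow> 'a \<Rightarrow> ereal" where
  "fminus_iso f x y = Sup ((\<lambda>z. ereal (f z)) ` (down x \<inter> down y))"

definition fminus_anti :: "('a::order \<Rightarrow> real) \<Rightarrow> 'a \<Rightarrow> 'a \<Rightarrow> ereal" where
  "fminus_anti f x y = Inf ((\<lambda>z. ereal (f z)) ` (down x \<inter> down y))"

definition fplus_iso :: "('a::order \<Rightarrow> real) \<Rightarrow> 'a \<Rightarrow> 'a \<Rightarrow> ereal" where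
  "fplus_iso f x y = Inf ((\<lambda>z. ereal (f z)) ` (up x \<inter> up y))"

definition fplus_anti :: "('a::order \<Rightarrow> real) \<Rightarrow> 'a \<Rightarrow> 'a \<Rightarrow> ereal" where
  "fplus_anti f x y = Sup ((\<lambda>z. ereal (f z)) ` (up x \<inter> up y))"

definition lower_valuation :: "('a::order \<Rightarrow> real) \<Rightarrow> bool" where
  "lower_valuation v \<longleftrightarrow>
     (isotone v \<and> (\<forall>x y::'a. down x \<inter> down y \<noteq> {}) \<and>
        (\<forall>x y. ereal (v x) + ereal (v y) \<le> fminus_iso v x y + fplus_iso v x y))
   \<or> (antitone v \<and> (\<forall>x y::'a. up x \<inter> up y \<noteq> {}) \<and>
        (\<forall>x y. ereal (v x) + ereal (v y) \<le> fminus_anti v x y + fplus_anti v x y))"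

definition upper_valuation :: "('a::order \<Rightarrow> real) \<Rightarrow> bool" where
  "upper_valuation v \<longleftrightarrow>
     (isotone v \<and> (\<forall>x y::'a. up x \<inter> up y \<noteq> {}) \<and>
        (\<forall>x y. fminus_iso v x y + fplus_iso v x y \<le> ereal (v x) + ereal (v y)))
   \<or> (antitone v \<and> (\<forall>x y::'a. down x \<inter> down y \<noteq> {}) \<and>
        (\<forall>x y. fminus_anti v x y + fplus_anti v x y \<le> ereal (v x) + ereal (v y)))"

definition is_metric :: "('a \<Rightarrow> 'a \<Rightarrow> real) \<Rightarrow> bool" where
  "is_metric d \<longleftrightarrow>
     (\<forall>x y. d x y \<ge> 0) \<and> (\<forall>x y. d x y = 0 \<longleftrightarrow> x = y) \<and>
     (\<forall>x y. d x y = d y x) \<and> (\<forall>x y z. d x z \<le> d x y + d y z)"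

end

theory Submission
  imports Defs
begin

lemma sup_fin:
  assumes "finite S" "S \<noteq> {}"
  shows "Sup ((\<lambda>z. ereal (f z)) ` S) = ereal (Max (f ` S))"
proof (rule antisym)
  show "Sup ((\<lambda>z. ereal (f z)) ` S) \<le> ereal (Max (f ` S))"
    using assms by (auto intro!: Sup_least)
  have "Max (f ` S) \<in> f ` S" using assms by simp
  then obtain z where "z \<in> S" "Max (f ` S) = f z" by auto
  then show "ereal (Max (f ` S)) \<le> Sup ((\<lambda>z. ereal (f z)) ` S)"
    by (auto intro!: Sup_upper)
qed

lemma inf_fin:
  assumes "finite S" "S \<noteq> {}"
  shows "Inf ((\<lambda>z. ereal (f z)) ` S) = ereal (Min (f ` S))"
proof (rule antisym)
  show "ereal (Min (f ` S)) \<le> Inf ((\<lambda>z. ereal (f z)) ` S)"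
    using assms by (auto intro!: Inf_greatest)
  have "Min (f ` S) \<in> f ` S" using assms by simp
  then obtain z where "z \<in> S" "Min (f ` S) = f z" by auto
  then show "Inf ((\<lambda>z. ereal (f z)) ` S) \<le> ereal (Min (f ` S))"
    by (auto intro!: Inf_lower)
qed

lemma generic:
  fixes le :: "'a::finite \<Rightarrow> 'a \<Rightarrow> bool" and v :: "'a \<Rightarrow> real"
  assumes refl: "\<And>x. le x x"
    and trans: "\<And>x y z. le x y \<Longrightarrow> le y z \<Longrightarrow> le x z"
    and ne: "\<And>x y. \<exists>z. le z x \<and> le z y"
    and strict: "\<And>x y. le x y \<Longrightarrow> x \<noteq> y \<Longrightarrow> v x < v y"
    and H: "\<And>x y u. le x u \<Longrightarrow> le y u \<Longrightarrow> v x + v y \<le> Max (v ` {z. le z x \<and> le z y}) + v u"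
  shows "is_metric (\<lambda>x y. v x + v y - 2 * Max (v ` {z. le z x \<and> le z y}))"
proof -
  define m where "m x y = Max (v ` {z. le z x \<and> le z y})" for x y
  have mono: "le x y \<Longrightarrow> v x \<le> v y" for x y
    using strict[of x y] by (cases "x = y") auto
  have fin: "finite (v ` {z. le z x \<and> le z y})" for x y by simp
  have nem: "v ` {z. le z x \<and> le z y} \<noteq> {}" for x y using ne[of x y] by auto
  have att: "\<exists>z. le z x \<and> le z y \<and> v z = m x y" for x y
  proof -
    have "m x y \<in> v ` {z. le z x \<and> le z y}" unfolding m_def using Max_in[OF fin nem] .
    then show ?thesis by auto
  qed
  have ge: "le z x \<Longrightarrow> le z y \<Longrightarrow> v z \<le> m x y" for x y z
    unfolding m_def using fin by (intro Max_ge) auto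
  have mx: "m x y \<le> v x" "m x y \<le> v y" for x y
    using att[of x y] mono by force+
  have mxx: "m x x = v x" for x using mx[of x x] ge[of x x x] refl by force
  have sym: "m x y = m y x" for x y unfolding m_def by (metis (no_types, lifting) Collect_cong)
  show ?thesis unfolding m_def[symmetric] is_metric_def
  proof (intro conjI allI)
    fix x y show "0 \<le> v x + v y - 2 * m x y" using mx[of x y] by linarith
  next
    fix x y show "(v x + v y - 2 * m x y = 0) = (x = y)"
    proof
      assume 0: "v x + v y - 2 * m x y = 0"
      then have e: "m x y = v x" "m x y = v y" using mx[of x y] by linarith+
      obtain z where z: "le z x" "le z y" "v z = m x y" using att by blast
      have "z = x" using strict[OF z(1)] z e by force
      moreover have "z = y" using strict[OF z(2)] z e by force
      ultimately show "x = y" by simp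
    qed (simp add: mxx)
  next
    fix x y show "v x + v y - 2 * m x y = v y + v x - 2 * m y x" using sym by simp
  next
    fix x y z
    obtain a where a: "le a x" "le a y" "v a = m x y" using att by blast
    obtain b where b: "le b y" "le b z" "v b = m y z" using att by blast
    obtain c where c: "le c a" "le c b" "v c = m a b" using att by blast
    have "v a + v b \<le> m a b + v y" using H[OF a(2) b(1)] unfolding m_def .
    moreover have "m a b \<le> m x z" using ge[of c x z] c a b trans by metis
    ultimately show "v x + v z - 2 * m x z \<le> v x + v y - 2 * m x y + (v y + v z - 2 * m y z)"
      using a b by linarith
  qed
qed


lemma ereal_aux: "ereal a + ereal b \<le> ereal c + e \<Longrightarrow> e \<le> ereal d \<Longrightarrow> a + b \<le> c + d"
proof -
  assume 1: "ereal a + ereal b \<le> ereal c + e" and 2: "e \<le> ereal d"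
  have "ereal c + e \<le> ereal c + ereal d" using 2 by (rule add_left_mono)
  with 1 have "ereal (a + b) \<le> ereal (c + d)" by (metis order_trans plus_ereal.simps(1))
  then show ?thesis by simp
qed

lemma ereal_aux2: "e + ereal c \<le> ereal a + ereal b \<Longrightarrow> ereal d \<le> e \<Longrightarrow> d + c \<le> a + b"
proof -
  assume 1: "e + ereal c \<le> ereal a + ereal b" and 2: "ereal d \<le> e"
  have "ereal d + ereal c \<le> e + ereal c" using 2 by (rule add_right_mono)
  with 1 have "ereal (d + c) \<le> ereal (a + b)" by (metis order_trans plus_ereal.simps(1))
  then show ?thesis by simp
qed

lemma max_neg:
  fixes v :: "'a \<Rightarrow> real"
  assumes "finite S" "S \<noteq> {}"
  shows "Max ((\<lambda>z. - v z) ` S) = - Min (v ` S)"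
proof (rule Max_eqI)
  show "finite ((\<lambda>z. - v z) ` S)" using assms by simp
  show "y \<le> - Min (v ` S)" if "y \<in> (\<lambda>z. - v z) ` S" for y
  proof -
    from that obtain z where z: "z \<in> S" "y = - v z" by auto
    have "Min (v ` S) \<le> v z" using assms z by simp
    then show ?thesis using z by simp
  qed
  have "Min (v ` S) \<in> v ` S" using assms by simp
  then show "- Min (v ` S) \<in> (\<lambda>z. - v z) ` S" by auto
qed

lemma degen1: fixes v :: "'a::order \<Rightarrow> real" and a b :: 'a shows "antitone v \<Longrightarrow> strictly_isotone v \<Longrightarrow> a \<le> b \<Longrightarrow> a = b"
proof (rule ccontr)
  assume 1: "antitone v" "strictly_isotone v" "a \<le> b" "a \<noteq> b"
  then have "a < b" by simp
  then show False using 1 unfolding antitone_def strictly_isotone_def by (metis not_le)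
qed

lemma degen2: fixes v :: "'a::order \<Rightarrow> real" and a b :: 'a shows "isotone v \<Longrightarrow> strictly_antitone v \<Longrightarrow> a \<le> b \<Longrightarrow> a = b"
proof (rule ccontr)
  assume 1: "isotone v" "strictly_antitone v" "a \<le> b" "a \<noteq> b"
  then have "a < b" by simp
  then show False using 1 unfolding isotone_def strictly_antitone_def by (metis not_le)
qed

lemma downs: "down x \<inter> down y = {z. z \<le> x \<and> z \<le> y}" by (auto simp: down_def)
lemma ups: "up x \<inter> up y = {z. x \<le> z \<and> y \<le> z}" by (auto simp: up_def)

theorem mainTheorem1:
  fixes v :: "'a::{order,finite} \<Rightarrow> real"
  shows
   "((\<forall>x y::'a. down x \<inter> down y \<noteq> {}) \<and> strictly_isotone v \<and> lower_valuation v \<longrightarrow>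
       is_metric (\<lambda>x y. v x + v y - 2 * real_of_ereal (fminus_iso v x y)))
  \<and> ((\<forall>x y::'a. up x \<inter> up y \<noteq> {}) \<and> strictly_antitone v \<and> lower_valuation v \<longrightarrow>
       is_metric (\<lambda>x y. v x + v y - 2 * real_of_ereal (fplus_anti v x y)))
  \<and> ((\<forall>x y::'a. up x \<inter> up y \<noteq> {}) \<and> strictly_isotone v \<and> upper_valuation v \<longrightarrow>
       is_metric (\<lambda>x y. 2 * real_of_ereal (fplus_iso v x y) - v x - v y))
  \<and> ((\<forall>x y::'a. down x \<inter> down y \<noteq> {}) \<and> strictly_antitone v \<and> upper_valuation v \<longrightarrow>
       is_metric (\<lambda>x y. 2 * real_of_ereal (fminus_anti v x y) - v x - v y))"
proof (intro conjI impI; elim conjE)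
  assume A: "\<forall>x y::'a. down x \<inter> down y \<noteq> {}" and S: "strictly_isotone v" and L: "lower_valuation v"
  have ne: "\<exists>z. z \<le> x \<and> z \<le> y" for x y :: 'a using A by (auto simp: down_def)
  have fm: "fminus_iso v x y = ereal (Max (v ` {z. z \<le> x \<and> z \<le> y}))" for x y
    unfolding fminus_iso_def downs using ne[of x y] by (intro sup_fin) auto
  have "is_metric (\<lambda>x y. v x + v y - 2 * Max (v ` {z. z \<le> x \<and> z \<le> y}))"
  proof (rule generic)
    show "\<And>x y. x \<le> y \<Longrightarrow> x \<noteq> y \<Longrightarrow> v x < v y" using S by (auto simp: strictly_isotone_def)
    fix x y u :: 'a assume xu: "x \<le> u" and yu: "y \<le> u"
    show "v x + v y \<le> Max (v ` {z. z \<le> x \<and> z \<le> y}) + v u"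
      using L unfolding lower_valuation_def
    proof (elim disjE conjE)
      assume "\<forall>x y. ereal (v x) + ereal (v y) \<le> fminus_iso v x y + fplus_iso v x y"
      then have 1: "ereal (v x) + ereal (v y) \<le> ereal (Max (v ` {z. z \<le> x \<and> z \<le> y})) + fplus_iso v x y"
        using fm by metis
      have "fplus_iso v x y \<le> ereal (v u)" unfolding fplus_iso_def using xu yu
        by (intro Inf_lower) (auto simp: up_def)
      with 1 show ?thesis by (rule ereal_aux)
    next
      assume "antitone v"
      then have eq: "a \<le> b \<Longrightarrow> a = b" for a b :: 'a using S
        by (metis degen1)
      have "x = u" "y = u" using eq xu yu by auto
      moreover have "v u \<le> Max (v ` {z. z \<le> u \<and> z \<le> u})" by (intro Max_ge) auto
      ultimately show ?thesis by simp
    qed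
  qed (use ne in \<open>auto intro: order_trans\<close>)
  then show "is_metric (\<lambda>x y. v x + v y - 2 * real_of_ereal (fminus_iso v x y))"
    by (simp add: fm)
next
  assume A: "\<forall>x y::'a. up x \<inter> up y \<noteq> {}" and S: "strictly_antitone v" and L: "lower_valuation v"
  have ne: "\<exists>z. x \<le> z \<and> y \<le> z" for x y :: 'a using A by (auto simp: up_def)
  have fm: "fplus_anti v x y = ereal (Max (v ` {z. x \<le> z \<and> y \<le> z}))" for x y
    unfolding fplus_anti_def ups using ne[of x y] by (intro sup_fin) auto
  have "is_metric (\<lambda>x y. v x + v y - 2 * Max (v ` {z. x \<le> z \<and> y \<le> z}))"
  proof (rule generic[where le="\<lambda>a b. b \<le> a"])
    show "\<And>x y. y \<le> x \<Longrightarrow> x \<noteq> y \<Longrightarrow> v x < v y" using S by (auto simp: strictly_antitone_def)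
    fix x y u :: 'a assume xu: "u \<le> x" and yu: "u \<le> y"
    show "v x + v y \<le> Max (v ` {z. x \<le> z \<and> y \<le> z}) + v u"
      using L unfolding lower_valuation_def
    proof (elim disjE conjE)
      assume "\<forall>x y. ereal (v x) + ereal (v y) \<le> fminus_anti v x y + fplus_anti v x y"
      then have 1: "ereal (v x) + ereal (v y) \<le> ereal (Max (v ` {z. x \<le> z \<and> y \<le> z})) + fminus_anti v x y"
        using fm by (metis add.commute)
      have "fminus_anti v x y \<le> ereal (v u)" unfolding fminus_anti_def using xu yu
        by (intro Inf_lower) (auto simp: down_def)
      with 1 show ?thesis by (rule ereal_aux)
    next
      assume "isotone v"
      then have eq: "a \<le> b \<Longrightarrow> a = b" for a b :: 'a using S
        by (metis degen2)
      have "x = u" "y = u" using eq xu yu by auto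
      moreover have "v u \<le> Max (v ` {z. u \<le> z \<and> u \<le> z})" by (intro Max_ge) auto
      ultimately show ?thesis by simp
    qed
  qed (use ne in \<open>auto intro: order_trans\<close>)
  then show "is_metric (\<lambda>x y. v x + v y - 2 * real_of_ereal (fplus_anti v x y))"
    by (simp add: fm)
next
  assume A: "\<forall>x y::'a. up x \<inter> up y \<noteq> {}" and S: "strictly_isotone v" and L: "upper_valuation v"
  have ne: "\<exists>z. x \<le> z \<and> y \<le> z" for x y :: 'a using A by (auto simp: up_def)
  have fm: "fplus_iso v x y = ereal (Min (v ` {z. x \<le> z \<and> y \<le> z}))" for x y
    unfolding fplus_iso_def ups using ne[of x y] by (intro inf_fin) auto
  have mn: "Max ((\<lambda>z. - v z) ` {z. x \<le> z \<and> y \<le> z}) = - Min (v ` {z. x \<le> z \<and> y \<le> z})" for x y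
    using ne[of x y] by (intro max_neg) auto
  have "is_metric (\<lambda>x y. (- v x) + (- v y) - 2 * Max ((\<lambda>z. - v z) ` {z. x \<le> z \<and> y \<le> z}))"
  proof (rule generic[where le="\<lambda>a b. b \<le> a"])
    show "\<And>x y. y \<le> x \<Longrightarrow> x \<noteq> y \<Longrightarrow> - v x < - v y" using S by (auto simp: strictly_isotone_def)
    fix x y u :: 'a assume xu: "u \<le> x" and yu: "u \<le> y"
    have "Min (v ` {z. x \<le> z \<and> y \<le> z}) + v u \<le> v x + v y"
      using L unfolding upper_valuation_def
    proof (elim disjE conjE)
      assume "\<forall>x y. fminus_iso v x y + fplus_iso v x y \<le> ereal (v x) + ereal (v y)"
      then have 1: "fminus_iso v x y + ereal (Min (v ` {z. x \<le> z \<and> y \<le> z})) \<le> ereal (v x) + ereal (v y)"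
        using fm by metis
      have "ereal (v u) \<le> fminus_iso v x y" unfolding fminus_iso_def using xu yu
        by (intro Sup_upper) (auto simp: down_def)
      with 1 show ?thesis by (metis ereal_aux2 add.commute)
    next
      assume "antitone v"
      then have eq: "a \<le> b \<Longrightarrow> a = b" for a b :: 'a using S
        by (metis degen1)
      have "x = u" "y = u" using eq xu yu by auto
      moreover have "Min (v ` {z. u \<le> z \<and> u \<le> z}) \<le> v u" by (intro Min_le) auto
      ultimately show ?thesis by simp
    qed
    then show "- v x + - v y \<le> Max ((\<lambda>z. - v z) ` {z. x \<le> z \<and> y \<le> z}) + - v u"
      by (simp add: mn)
  qed (use ne in \<open>auto intro: order_trans\<close>)
  moreover have "(\<lambda>x y. (- v x) + (- v y) - 2 * Max ((\<lambda>z. - v z) ` {z. x \<le> z \<and> y \<le> z}))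
     = (\<lambda>x y. 2 * real_of_ereal (fplus_iso v x y) - v x - v y)"
    by (intro ext) (simp add: fm mn)
  ultimately show "is_metric (\<lambda>x y. 2 * real_of_ereal (fplus_iso v x y) - v x - v y)"
    by simp
next
  assume A: "\<forall>x y::'a. down x \<inter> down y \<noteq> {}" and S: "strictly_antitone v" and L: "upper_valuation v"
  have ne: "\<exists>z. z \<le> x \<and> z \<le> y" for x y :: 'a using A by (auto simp: down_def)
  have fm: "fminus_anti v x y = ereal (Min (v ` {z. z \<le> x \<and> z \<le> y}))" for x y
    unfolding fminus_anti_def downs using ne[of x y] by (intro inf_fin) auto
  have mn: "Max ((\<lambda>z. - v z) ` {z. z \<le> x \<and> z \<le> y}) = - Min (v ` {z. z \<le> x \<and> z \<le> y})" for x y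
    using ne[of x y] by (intro max_neg) auto
  have "is_metric (\<lambda>x y. (- v x) + (- v y) - 2 * Max ((\<lambda>z. - v z) ` {z. z \<le> x \<and> z \<le> y}))"
  proof (rule generic)
    show "\<And>x y. x \<le> y \<Longrightarrow> x \<noteq> y \<Longrightarrow> - v x < - v y" using S by (auto simp: strictly_antitone_def)
    fix x y u :: 'a assume xu: "x \<le> u" and yu: "y \<le> u"
    have "Min (v ` {z. z \<le> x \<and> z \<le> y}) + v u \<le> v x + v y"
      using L unfolding upper_valuation_def
    proof (elim disjE conjE)
      assume "isotone v"
      then have eq: "a \<le> b \<Longrightarrow> a = b" for a b :: 'a using S
        by (metis degen2)
      have "x = u" "y = u" using eq xu yu by auto
      moreover have "Min (v ` {z. z \<le> u \<and> z \<le> u}) \<le> v u" by (intro Min_le) auto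
      ultimately show ?thesis by simp
    next
      assume "\<forall>x y. fminus_anti v x y + fplus_anti v x y \<le> ereal (v x) + ereal (v y)"
      then have 1: "fplus_anti v x y + ereal (Min (v ` {z. z \<le> x \<and> z \<le> y})) \<le> ereal (v x) + ereal (v y)"
        using fm by (metis add.commute)
      have "ereal (v u) \<le> fplus_anti v x y" unfolding fplus_anti_def using xu yu
        by (intro Sup_upper) (auto simp: up_def)
      with 1 show ?thesis by (metis ereal_aux2 add.commute)
    qed
    then show "- v x + - v y \<le> Max ((\<lambda>z. - v z) ` {z. z \<le> x \<and> z \<le> y}) + - v u"
      by (simp add: mn)
  qed (use ne in \<open>auto intro: order_trans\<close>)
  moreover have "(\<lambda>x y. (- v x) + (- v y) - 2 * Max ((\<lambda>z. - v z) ` {z. z \<le> x \<and> z \<le> y}))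
     = (\<lambda>x y. 2 * real_of_ereal (fminus_anti v x y) - v x - v y)"
    by (intro ext) (simp add: fm mn)
  ultimately show "is_metric (\<lambda>x y. 2 * real_of_ereal (fminus_anti v x y) - v x - v y)"
    by simp
qed

end
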